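(* Let $H_\theta:\mathbb{R}^n\to\mathbb{R}^D$ be injective and satisfy $\|H_\theta(x)-H_\theta(y)\|_2\ge\alpha\|x-y\|_2$ for all $x,y\in\mathbb{R}^n$, for some $\alpha\ge 0$. Let $w\in\mathbb{S}^{D-1}$ satisfy $\mathrm{dist}(w,s_\theta(\mathscr{P}))\ge\rho$. Then for all $x,y\in\mathbb{R}^n$, $$\|Q_wH_\theta(x)-Q_wH_\theta(y)\|_2\ge\frac{1}{\sqrt2}\rho\alpha\|x-y\|_2.$$
   Context: $\mathbb{S}^{D-1}$ is the unit sphere in $\mathbb{R}^D$; distances are Euclidean in $\mathbb{R}^D$. $\mathscr{P}=\{(x,y)\in\mathbb{R}^n\times\mathbb{R}^n: x\ne y\}$ and $s_\theta:\mathscr{P}\to\mathbb{S}^{D-1}$, $s_\theta(x,y)=\frac{H_\theta(x)-H_\theta(y)}{\|H_\theta(x)-H_\theta(y)\|_2}$. For a unit vector $w$, $Q_w:\mathbb{R}^D\to\mathbb{R}^D$ is $Q_w(z)=z-\langle z,w\rangle w$. *)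

theory Defs
  imports "HOL-Analysis.Analysis"
begin

definition pairs_distinct :: "('a \<times> 'a) set" where
  "pairs_distinct = {(x, y). x \<noteq> y}"

definition secant :: "('a \<Rightarrow> 'b::real_normed_vector) \<Rightarrow> 'a \<times> 'a \<Rightarrow> 'b" where
  "secant H p = (H (fst p) - H (snd p)) /\<^sub>R norm (H (fst p) - H (snd p))"

definition Qproj :: "'b::real_inner \<Rightarrow> 'b \<Rightarrow> 'b" where
  "Qproj w z = z - (inner z w) *\<^sub>R w"

end

theory Submission
  imports Defs
begin

lemma l1: fixes w s :: "'a::real_inner" shows "(norm (w - s))^2 = inner w w + inner s s - 2 * inner s w"
  unfolding power2_norm_eq_inner inner_diff_left inner_diff_right inner_commute[of w s] by simp
lemma l2: fixes w s :: "'a::real_inner" shows "(norm (w + s))^2 = inner w w + inner s s + 2 * inner s w"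
  unfolding power2_norm_eq_inner inner_add_left inner_add_right inner_commute[of w s] by simp
lemma l3: fixes w s :: "'a::real_inner" shows "inner (s - a *\<^sub>R w) (s - a *\<^sub>R w) = inner s s - 2*a* inner s w + a^2 * inner w w"
  unfolding inner_diff_left inner_diff_right inner_commute[of w s] inner_scaleR_left inner_scaleR_right 
  by (simp add: power2_eq_square algebra_simps)

lemma Qproj_norm_sq:
  fixes w s :: "'a::real_inner"
  assumes "norm w = 1"
  shows "(norm (Qproj w s))^2 = (norm s)^2 - (inner s w)^2"
proof -
  have ww: "inner w w = 1" using assms by (simp add: norm_eq_sqrt_inner)
  have "(norm (Qproj w s))^2 = inner (s - inner s w *\<^sub>R w) (s - inner s w *\<^sub>R w)"
    unfolding Qproj_def power2_norm_eq_inner ..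
  also have "\<dots> = inner s s - 2 * (inner s w)^2 + (inner s w)^2 * inner w w"
    unfolding l3 by (simp add: power2_eq_square)
  finally show ?thesis using ww by (simp add: power2_norm_eq_inner)
qed

lemma key:
  fixes w s :: "'a::real_inner"
  assumes "norm w = 1" "norm s = 1" "norm (w - s) \<ge> \<rho>" "norm (w + s) \<ge> \<rho>" "\<rho> \<ge> 0"
  shows "norm (Qproj w s) \<ge> \<rho> / sqrt 2"
proof -
  define c where "c = inner s w"
  have ww: "inner w w = 1" "inner s s = 1" using assms by (simp_all add: norm_eq_sqrt_inner)
  have "(norm (w - s))^2 = 2 - 2*c"
    unfolding l1 ww c_def by simp
  moreover have "\<rho>^2 \<le> (norm (w - s))^2" by (rule power_mono[OF assms(3) assms(5)])
  ultimately have a: "\<rho>^2 \<le> 2 - 2*c" by simp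
  have "(norm (w + s))^2 = 2 + 2*c"
    unfolding l2 ww c_def by simp
  moreover have "\<rho>^2 \<le> (norm (w + s))^2" by (rule power_mono[OF assms(4) assms(5)])
  ultimately have b: "\<rho>^2 \<le> 2 + 2*c" by simp
  have q: "(norm (Qproj w s))^2 = 1 - c^2" using Qproj_norm_sq[OF assms(1)] assms(2) c_def by simp
  have "\<rho>^2/2 \<le> 1 - c^2"
  proof (cases "c \<ge> 0")
    case True
    have r: "\<rho>^2/2 \<le> (1-c)" using a by simp
    have p: "0 \<le> 1 - c" using a zero_le_power2[of \<rho>] by linarith
    have "(1-c) \<le> (1-c)*(1+c)" using mult_left_mono[of 1 "1+c" "1-c"] True p by simp
    hence "\<rho>^2/2 \<le> (1-c)*(1+c)" using r by linarith
    thus ?thesis by (simp add: power2_eq_square algebra_simps)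
  next
    case False
    have r: "\<rho>^2/2 \<le> (1+c)" using b by simp
    have p: "0 \<le> 1 + c" using b zero_le_power2[of \<rho>] by linarith
    have "(1+c) \<le> (1-c)*(1+c)" using mult_right_mono[of 1 "1-c" "1+c"] False p by simp
    hence "\<rho>^2/2 \<le> (1-c)*(1+c)" using r by linarith
    thus ?thesis by (simp add: power2_eq_square algebra_simps)
  qed
  hence "(\<rho> / sqrt 2)^2 \<le> (norm (Qproj w s))^2" using q by (simp add: power_divide)
  thus ?thesis by (meson norm_ge_zero power2_le_imp_le)
qed

lemma Qproj_diff: "Qproj w a - Qproj w b = Qproj w (a - b)"
  by (simp add: Qproj_def inner_diff_left algebra_simps)

lemma Qproj_scale: "Qproj w (r *\<^sub>R a) = r *\<^sub>R Qproj w a"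
  by (simp add: Qproj_def algebra_simps)

theorem lemma12:
  fixes H :: "real ^ 'n \<Rightarrow> real ^ 'd"
    and \<alpha> \<rho> :: real and w :: "real ^ 'd"
  assumes "inj H"
    and "\<alpha> \<ge> 0"
    and "\<And>x y. norm (H x - H y) \<ge> \<alpha> * norm (x - y)"
    and "w \<in> sphere 0 1"
    and "infdist w (secant H ` pairs_distinct) \<ge> \<rho>"
  shows "\<forall>x y. norm (Qproj w (H x) - Qproj w (H y)) \<ge> (1 / sqrt 2) * \<rho> * \<alpha> * norm (x - y)"
proof (intro allI)
  fix x y
  show "norm (Qproj w (H x) - Qproj w (H y)) \<ge> (1 / sqrt 2) * \<rho> * \<alpha> * norm (x - y)"
  proof (cases "x = y \<or> \<rho> < 0")
    case True
    then show ?thesis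
    proof
      assume "\<rho> < 0"
      hence "\<rho> * \<alpha> * norm (x - y) \<le> 0" using assms(2)
        by (simp add: mult_nonpos_nonneg mult_nonneg_nonneg mult_le_0_iff)
      hence "(1 / sqrt 2) * \<rho> * \<alpha> * norm (x - y) \<le> 0"
        by (simp add: divide_nonpos_pos)
      thus ?thesis by (meson norm_ge_zero order_trans)
    qed simp
  next
    case False
    hence xy: "x \<noteq> y" and rp: "\<rho> \<ge> 0" by auto
    define u where "u = H x - H y"
    have u0: "u \<noteq> 0" using xy assms(1) by (simp add: u_def inj_eq)
    define s where "s = u /\<^sub>R norm u"
    have s1: "norm s = 1" using u0 by (simp add: s_def)
    have w1: "norm w = 1" using assms(4) by simp
    have m1: "s \<in> secant H ` pairs_distinct"
      by (rule image_eqI[of _ _ "(x,y)"]) (use xy in \<open>simp_all add: secant_def pairs_distinct_def s_def u_def\<close>)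
    have m2: "-s \<in> secant H ` pairs_distinct"
    proof (rule image_eqI[of _ _ "(y,x)"])
      show "(y,x) \<in> pairs_distinct" using xy by (simp add: pairs_distinct_def)
      have "H y - H x = - u" by (simp add: u_def)
      thus "-s = secant H (y,x)" by (simp add: secant_def s_def del: minus_diff_eq)
    qed
    have d1: "norm (w - s) \<ge> \<rho>"
      using assms(5) infdist_le[OF m1, of w] by (simp add: dist_norm)
    have d2: "norm (w + s) \<ge> \<rho>"
      using assms(5) infdist_le[OF m2, of w] by (simp add: dist_norm)
    have k: "norm (Qproj w s) \<ge> \<rho> / sqrt 2" by (rule key[OF w1 s1 d1 d2 rp])
    have "Qproj w (H x) - Qproj w (H y) = norm u *\<^sub>R Qproj w s"
      using u0 by (simp add: Qproj_diff s_def Qproj_scale u_def[symmetric])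
    hence e: "norm (Qproj w (H x) - Qproj w (H y)) = norm u * norm (Qproj w s)" by simp
    have "(1 / sqrt 2) * \<rho> * \<alpha> * norm (x - y) = (\<rho> / sqrt 2) * (\<alpha> * norm (x - y))" by simp
    also have "\<dots> \<le> norm (Qproj w s) * norm u"
      using k assms(3)[of x y] assms(2) rp by (intro mult_mono) (auto simp: u_def)
    finally show ?thesis using e by (simp add: mult.commute)
  qed
qed

end
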